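(* Let $V$ be a quasi-regular mixed lattice vector space and $A$ a mixed lattice subspace of $V$. Then the right disjoint complement of $A$ satisfies $$A^{\perp}=\{x\in V: s(z)\curlywedge s(x)=0 \text{ for all } z\in A\}.$$
   Context: A mixed lattice vector space is a real vector space $V$ with two partial orderings $\le$ (initial) and $\preceq$ (specific), each compatible with the vector space structure, such that for all $x,y$ the mixed lower envelope $x\curlywedge y=\max\{w: w\preceq x,\ w\le y\}$ and mixed upper envelope $x\curlyvee y=\min\{w: x\preceq w,\ y\le w\}$ exist (max/min with respect to $\le$). $V_{sp}=\{x:0\preceq x\}$, $A_{sp}=A\cap V_{sp}$. $V$ is quasi-regular if $V_{sp}$ is closed under $\curlywedge,\curlyvee$. A mixed lattice subspace is a linear subspace closed under $\curlywedge,\curlyvee$; an ideal is a $(\le)$-order convex mixed lattice subspace. The right disjoint complement $A^{\perp}$ is the smallest ideal of $V$ containing $\{x\in V_{sp}: z\curlywedge x=0 \text{ for all } z\in A_{sp}\}$. The symmetric generalized absolute value is $s(x)=\tfrac12\big((x\curlyvee 0)+(0\curlyvee(-x))+((-x)\curlyvee 0)+(0\curlyvee x)\big)$. *)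

theory Defs
  imports Main "HOL.Real_Vector_Spaces"
begin

definition compatible_order :: "('a::real_vector \<Rightarrow> 'a \<Rightarrow> bool) \<Rightarrow> bool" where
  "compatible_order r \<longleftrightarrow>
     (\<forall>x. r x x) \<and> (\<forall>x y. r x y \<and> r y x \<longrightarrow> x = y) \<and>
     (\<forall>x y z. r x y \<and> r y z \<longrightarrow> r x z) \<and>
     (\<forall>x y z. r x y \<longrightarrow> r (x + z) (y + z)) \<and>
     (\<forall>x y (c::real). r x y \<and> 0 \<le> c \<longrightarrow> r (c *\<^sub>R x) (c *\<^sub>R y))"

definition is_mlow :: "('a \<Rightarrow> 'a \<Rightarrow> bool) \<Rightarrow> ('a \<Rightarrow> 'a \<Rightarrow> bool) \<Rightarrow> 'a \<Rightarrow> 'a \<Rightarrow> 'a \<Rightarrow> bool" where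
  "is_mlow le sle x y w \<longleftrightarrow> sle w x \<and> le w y \<and> (\<forall>v. sle v x \<and> le v y \<longrightarrow> le v w)"

definition is_mup :: "('a \<Rightarrow> 'a \<Rightarrow> bool) \<Rightarrow> ('a \<Rightarrow> 'a \<Rightarrow> bool) \<Rightarrow> 'a \<Rightarrow> 'a \<Rightarrow> 'a \<Rightarrow> bool" where
  "is_mup le sle x y w \<longleftrightarrow> sle x w \<and> le y w \<and> (\<forall>v. sle x v \<and> le y v \<longrightarrow> le w v)"

definition mlow :: "('a \<Rightarrow> 'a \<Rightarrow> bool) \<Rightarrow> ('a \<Rightarrow> 'a \<Rightarrow> bool) \<Rightarrow> 'a \<Rightarrow> 'a \<Rightarrow> 'a" where
  "mlow le sle x y = (THE w. is_mlow le sle x y w)"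

definition mup :: "('a \<Rightarrow> 'a \<Rightarrow> bool) \<Rightarrow> ('a \<Rightarrow> 'a \<Rightarrow> bool) \<Rightarrow> 'a \<Rightarrow> 'a \<Rightarrow> 'a" where
  "mup le sle x y = (THE w. is_mup le sle x y w)"

definition mixed_lattice_vs :: "('a::real_vector \<Rightarrow> 'a \<Rightarrow> bool) \<Rightarrow> ('a \<Rightarrow> 'a \<Rightarrow> bool) \<Rightarrow> bool" where
  "mixed_lattice_vs le sle \<longleftrightarrow> compatible_order le \<and> compatible_order sle \<and>
     (\<forall>x y. \<exists>w. is_mlow le sle x y w) \<and> (\<forall>x y. \<exists>w. is_mup le sle x y w)"

definition Vsp :: "('a::real_vector \<Rightarrow> 'a \<Rightarrow> bool) \<Rightarrow> 'a set" where
  "Vsp sle = {x. sle 0 x}"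

definition quasi_regular :: "('a::real_vector \<Rightarrow> 'a \<Rightarrow> bool) \<Rightarrow> ('a \<Rightarrow> 'a \<Rightarrow> bool) \<Rightarrow> bool" where
  "quasi_regular le sle \<longleftrightarrow>
     (\<forall>x\<in>Vsp sle. \<forall>y\<in>Vsp sle. mlow le sle x y \<in> Vsp sle \<and> mup le sle x y \<in> Vsp sle)"

definition linear_subspace :: "'a::real_vector set \<Rightarrow> bool" where
  "linear_subspace S \<longleftrightarrow> 0 \<in> S \<and> (\<forall>x\<in>S. \<forall>y\<in>S. x + y \<in> S) \<and> (\<forall>x\<in>S. \<forall>c::real. c *\<^sub>R x \<in> S)"

definition mixed_lattice_subspace :: "('a::real_vector \<Rightarrow> 'a \<Rightarrow> bool) \<Rightarrow> ('a \<Rightarrow> 'a \<Rightarrow> bool) \<Rightarrow> 'a set \<Rightarrow> bool" where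
  "mixed_lattice_subspace le sle S \<longleftrightarrow> linear_subspace S \<and>
     (\<forall>x\<in>S. \<forall>y\<in>S. mlow le sle x y \<in> S \<and> mup le sle x y \<in> S)"

definition ml_ideal :: "('a::real_vector \<Rightarrow> 'a \<Rightarrow> bool) \<Rightarrow> ('a \<Rightarrow> 'a \<Rightarrow> bool) \<Rightarrow> 'a set \<Rightarrow> bool" where
  "ml_ideal le sle I \<longleftrightarrow> mixed_lattice_subspace le sle I \<and>
     (\<forall>x\<in>I. \<forall>z\<in>I. \<forall>y. le x y \<and> le y z \<longrightarrow> y \<in> I)"

definition right_disj_compl :: "('a::real_vector \<Rightarrow> 'a \<Rightarrow> bool) \<Rightarrow> ('a \<Rightarrow> 'a \<Rightarrow> bool) \<Rightarrow> 'a set \<Rightarrow> 'a set" where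
  "right_disj_compl le sle A =
     \<Inter>{I. ml_ideal le sle I \<and>
           {x\<in>Vsp sle. \<forall>z\<in>A \<inter> Vsp sle. mlow le sle z x = 0} \<subseteq> I}"

definition sabs :: "('a::real_vector \<Rightarrow> 'a \<Rightarrow> bool) \<Rightarrow> ('a \<Rightarrow> 'a \<Rightarrow> bool) \<Rightarrow> 'a \<Rightarrow> 'a" where
  "sabs le sle x = (1/2::real) *\<^sub>R (mup le sle x 0 + mup le sle 0 (- x) + mup le sle (- x) 0 + mup le sle 0 x)"

end

theory Submission
  imports Defs
begin

lemma co_refl: "compatible_order r \<Longrightarrow> r x x"
  unfolding compatible_order_def by blast
lemma co_antisym: "compatible_order r \<Longrightarrow> r x y \<Longrightarrow> r y x \<Longrightarrow> x = y"
  unfolding compatible_order_def by blast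
lemma co_trans: "compatible_order r \<Longrightarrow> r x y \<Longrightarrow> r y z \<Longrightarrow> r x z"
  unfolding compatible_order_def by blast
lemma co_add: "compatible_order r \<Longrightarrow> r x y \<Longrightarrow> r (x + z) (y + z)"
  unfolding compatible_order_def by blast
lemma co_iff: "compatible_order r \<Longrightarrow> r x y = r 0 (y - x)"
proof
  assume c: "compatible_order r" and "r x y"
  then have "r (x + - x) (y + - x)" by (rule co_add)
  then show "r 0 (y - x)" by simp
next
  assume c: "compatible_order r" and "r 0 (y - x)"
  then have "r (0 + x) (y - x + x)" by (rule co_add)
  then show "r x y" by simp
qed
lemma co_pos_add: "compatible_order r \<Longrightarrow> r 0 a \<Longrightarrow> r 0 b \<Longrightarrow> r 0 (a + b)"
proof -
  assume c: "compatible_order r" and a: "r 0 a" and b: "r 0 b"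
  from c b have "r (0 + a) (b + a)" by (rule co_add)
  with c a show ?thesis by (metis add.commute add_0 co_trans)
qed
lemma co_pos_scale: "compatible_order r \<Longrightarrow> r 0 a \<Longrightarrow> 0 \<le> c \<Longrightarrow> r 0 (c *\<^sub>R a)"
  unfolding compatible_order_def by (metis scaleR_zero_right)
lemma co_scale: "compatible_order r \<Longrightarrow> r x y \<Longrightarrow> 0 \<le> c \<Longrightarrow> r (c *\<^sub>R x) (c *\<^sub>R y)"
  unfolding compatible_order_def by blast

locale mlv =
  fixes le sle :: "'a::real_vector \<Rightarrow> 'a \<Rightarrow> bool"
  assumes mlvs: "mixed_lattice_vs le sle" and qr: "quasi_regular le sle"
begin

lemma coL: "compatible_order le" using mlvs unfolding mixed_lattice_vs_def by blast
lemma coS: "compatible_order sle" using mlvs unfolding mixed_lattice_vs_def by blast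

lemma mlow_is: "is_mlow le sle x y (mlow le sle x y)"
proof -
  have ex: "\<exists>w. is_mlow le sle x y w" using mlvs unfolding mixed_lattice_vs_def by blast
  have "\<And>w w'. is_mlow le sle x y w \<Longrightarrow> is_mlow le sle x y w' \<Longrightarrow> w = w'"
    using co_antisym[OF coL] unfolding is_mlow_def by blast
  with ex have "\<exists>!w. is_mlow le sle x y w" by blast
  then show ?thesis unfolding mlow_def by (rule theI')
qed

lemma mup_is: "is_mup le sle x y (mup le sle x y)"
proof -
  have ex: "\<exists>w. is_mup le sle x y w" using mlvs unfolding mixed_lattice_vs_def by blast
  have "\<And>w w'. is_mup le sle x y w \<Longrightarrow> is_mup le sle x y w' \<Longrightarrow> w = w'"
    using co_antisym[OF coL] unfolding is_mup_def by blast
  with ex have "\<exists>!w. is_mup le sle x y w" by blast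
  then show ?thesis unfolding mup_def by (rule theI')
qed

lemma mlow_eq: "is_mlow le sle x y w \<Longrightarrow> mlow le sle x y = w"
  using mlow_is co_antisym[OF coL] unfolding is_mlow_def by blast
lemma mup_eq: "is_mup le sle x y w \<Longrightarrow> mup le sle x y = w"
  using mup_is co_antisym[OF coL] unfolding is_mup_def by blast

lemma mlow1: "sle (mlow le sle x y) x" using mlow_is unfolding is_mlow_def by blast
lemma mlow2: "le (mlow le sle x y) y" using mlow_is unfolding is_mlow_def by blast
lemma mlow3: "sle v x \<Longrightarrow> le v y \<Longrightarrow> le v (mlow le sle x y)"
  using mlow_is unfolding is_mlow_def by blast
lemma mup1: "sle x (mup le sle x y)" using mup_is unfolding is_mup_def by blast
lemma mup2: "le y (mup le sle x y)" using mup_is unfolding is_mup_def by blast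
lemma mup3: "sle x v \<Longrightarrow> le y v \<Longrightarrow> le (mup le sle x y) v"
  using mup_is unfolding is_mup_def by blast

lemma sp_pos: "sle 0 a \<Longrightarrow> le 0 a"
proof -
  assume a: "sle 0 a"
  have "sle 0 0" by (rule co_refl[OF coS])
  with a qr have "sle 0 (mlow le sle 0 a)" unfolding quasi_regular_def Vsp_def by blast
  moreover have "sle (mlow le sle 0 a) 0" by (rule mlow1)
  ultimately have "mlow le sle 0 a = 0" using co_antisym[OF coS] by blast
  then show ?thesis using mlow2[of 0 a] by simp
qed

lemma leI: "le 0 (y - x) \<Longrightarrow> le x y" using co_iff[OF coL, of x y] by (rule iffD2)
lemma leD: "le x y \<Longrightarrow> le 0 (y - x)" using co_iff[OF coL, of x y] by (rule iffD1)
lemma sleI: "sle 0 (y - x) \<Longrightarrow> sle x y" using co_iff[OF coS, of x y] by (rule iffD2)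
lemma sleD: "sle x y \<Longrightarrow> sle 0 (y - x)" using co_iff[OF coS, of x y] by (rule iffD1)
lemma le_diff: "le 0 p \<Longrightarrow> b - a = p \<Longrightarrow> le a b" using leI by simp
lemma le_trans: "le x y \<Longrightarrow> le y z \<Longrightarrow> le x z" using co_trans[OF coL] by blast
declare le_trans[trans]
lemma le_refl: "le x x" using co_refl[OF coL] by blast
lemma le_add2: "le a b \<Longrightarrow> le c d \<Longrightarrow> le (a + c) (b + d)"
proof -
  assume h: "le a b" "le c d"
  have "le 0 ((b - a) + (d - c))" by (rule co_pos_add[OF coL]) (rule leD, rule h)+
  then show ?thesis by (rule le_diff) (simp add: algebra_simps)
qed
lemma sle_add_pos: "sle 0 a \<Longrightarrow> sle 0 b \<Longrightarrow> sle 0 (a + b)" using co_pos_add[OF coS] by blast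
lemma le_antisym: "le x y \<Longrightarrow> le y x \<Longrightarrow> x = y" using co_antisym[OF coL] by blast

abbreviation M where "M \<equiv> mup le sle 0"

lemma M_pos: "sle 0 (M x)" by (rule mup1)
lemma M_ge: "le x (M x)" by (rule mup2)
lemma M_le: "sle 0 c \<Longrightarrow> le t c \<Longrightarrow> le (M t) c" by (rule mup3)
lemma M_nonneg: "le 0 (M x)" by (rule sp_pos[OF M_pos])

lemma M_sp: "sle 0 z \<Longrightarrow> M z = z"
  by (rule mup_eq) (auto simp: is_mup_def le_refl)

lemma M_neg_sp: "sle 0 z \<Longrightarrow> M (- z) = 0"
proof (rule mup_eq)
  assume z: "sle 0 z"
  have "le (-z) 0" by (rule le_diff[OF sp_pos[OF z]]) simp
  then show "is_mup le sle 0 (- z) 0"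
    unfolding is_mup_def using co_refl[OF coS] sp_pos by simp
qed

lemma M_x0: "mup le sle x 0 = x + M (- x)"
proof (rule mup_eq)
  let ?m = "M (- x)"
  have 1: "sle x (x + ?m)" by (rule sleI) (simp add: M_pos)
  have xm: "le (- x) ?m" by (rule M_ge)
  have 2: "le 0 (x + ?m)" by (rule le_diff[OF leD[OF xm]]) (simp add: algebra_simps)
  have 3: "le (x + ?m) v" if "sle x v" "le 0 v" for v
  proof -
    have "sle 0 (v - x)" using sleD[OF that(1)] .
    moreover have "le (- x) (v - x)" by (rule le_diff[OF leD[OF that(2)]]) simp
    ultimately have "le ?m (v - x)" by (rule M_le)
    then have mv: "le ?m (v - x)" .
    show ?thesis by (rule le_diff[OF leD[OF mv]]) (simp add: algebra_simps)
  qed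
  show "is_mup le sle x 0 (x + ?m)" unfolding is_mup_def using 1 2 3 by blast
qed

lemma sabs_eq: "sabs le sle x = M x + M (- x)"
proof -
  have "sabs le sle x = (1/2::real) *\<^sub>R ((x + M (- x)) + M (- x) + (- x + M (- (- x))) + M x)"
    unfolding sabs_def M_x0[of x] M_x0[of "-x"] ..
  also have "\<dots> = (1/2::real) *\<^sub>R (2 *\<^sub>R (M x + M (- x)))"
    by (simp add: algebra_simps scaleR_2)
  finally show ?thesis by simp
qed

lemma M_mono: "le y z \<Longrightarrow> le (M y) (M z)"
  by (rule M_le[OF M_pos]) (rule le_trans[OF _ M_ge])

lemma M_sub: "le (M (x + y)) (M x + M y)"
  by (rule M_le) (auto intro: sle_add_pos M_pos le_add2 M_ge)

lemma le_scale: "le x y \<Longrightarrow> 0 \<le> c \<Longrightarrow> le (c *\<^sub>R x) (c *\<^sub>R y)" using co_scale[OF coL] by blast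
lemma sle_scale: "sle x y \<Longrightarrow> 0 \<le> c \<Longrightarrow> sle (c *\<^sub>R x) (c *\<^sub>R y)" using co_scale[OF coS] by blast

lemma M_hom: "0 < c \<Longrightarrow> M (c *\<^sub>R x) = c *\<^sub>R M x"
proof (rule mup_eq)
  assume c: "0 < c"
  have 1: "sle 0 (c *\<^sub>R M x)" using sle_scale[OF M_pos, of c x] c by simp
  have 2: "le (c *\<^sub>R x) (c *\<^sub>R M x)" using le_scale[OF M_ge] c by simp
  have 3: "le (c *\<^sub>R M x) v" if "sle 0 v" "le (c *\<^sub>R x) v" for v
  proof -
    have "sle 0 ((1/c) *\<^sub>R v)" using sle_scale[OF that(1), of "1/c"] c by simp
    moreover have "le x ((1/c) *\<^sub>R v)" using le_scale[OF that(2), of "1/c"] c by simp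
    ultimately have "le (M x) ((1/c) *\<^sub>R v)" by (rule M_le)
    then show ?thesis using le_scale[of "M x" "(1/c) *\<^sub>R v" c] c by simp
  qed
  show "is_mup le sle 0 (c *\<^sub>R x) (c *\<^sub>R M x)" unfolding is_mup_def using 1 2 3 by blast
qed

lemma sabs_hom: "0 < c \<Longrightarrow> sabs le sle (c *\<^sub>R x) = c *\<^sub>R sabs le sle x"
  unfolding sabs_eq using M_hom[of c x] M_hom[of c "-x"] by (simp add: scaleR_add_right)
lemma sabs_neg: "sabs le sle (- x) = sabs le sle x"
  unfolding sabs_eq by (simp add: add.commute)
lemma sabs_sp: "sle 0 z \<Longrightarrow> sabs le sle z = z"
  unfolding sabs_eq by (simp add: M_sp M_neg_sp)
lemma sabs_pos: "sle 0 (sabs le sle x)"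
  unfolding sabs_eq by (intro sle_add_pos M_pos)
lemma sabs_nonneg: "le 0 (sabs le sle x)" by (rule sp_pos[OF sabs_pos])
lemma sabs_ge: "le x (sabs le sle x)"
  unfolding sabs_eq using le_add2[OF M_ge M_nonneg] by simp
lemma sabs_ge': "le (- x) (sabs le sle x)"
  using sabs_ge[of "-x"] sabs_neg by simp
lemma M_le_sabs: "le (M x) (sabs le sle x)"
  unfolding sabs_eq using le_add2[OF le_refl M_nonneg] by simp

lemma le_neg: "le a b \<Longrightarrow> le (- b) (- a)"
  by (rule le_diff[OF leD]) simp_all
lemma sle_trans: "sle x y \<Longrightarrow> sle y z \<Longrightarrow> sle x z" using co_trans[OF coS] by blast

lemma mlow_nonneg: "sle 0 a \<Longrightarrow> le 0 w \<Longrightarrow> le 0 (mlow le sle a w)" by (rule mlow3)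
lemma mlow_mono: "le w u \<Longrightarrow> le (mlow le sle a w) (mlow le sle a u)"
  by (rule mlow3[OF mlow1]) (rule le_trans[OF mlow2])

lemma mlow_add0:
  assumes a: "sle 0 a" and u: "sle 0 u" and v: "sle 0 v"
    and au: "mlow le sle a u = 0" and av: "mlow le sle a v = 0"
  shows "mlow le sle a (u + v) = 0"
proof -
  let ?w = "mlow le sle a (u + v)"
  have "sle (?w - u) ?w" by (rule sleI) (simp add: u)
  then have 1: "sle (?w - u) a" using mlow1 sle_trans by blast
  have 2: "le (?w - u) v" by (rule le_diff[OF leD[OF mlow2[of a "u + v"]]]) (simp add: algebra_simps)
  have "le (?w - u) 0" using mlow3[OF 1 2] av by simp
  then have wu: "le ?w u" by (rule le_diff[OF leD]) simp
  have "le ?w 0" using mlow3[OF mlow1 wu] au by simp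
  moreover have "le 0 ?w"
    by (rule mlow_nonneg[OF a sp_pos[OF sle_add_pos[OF u v]]])
  ultimately show ?thesis by (rule le_antisym)
qed

lemma mlow_hom:
  assumes c: "0 < c"
  shows "mlow le sle (c *\<^sub>R a) (c *\<^sub>R u) = c *\<^sub>R mlow le sle a u"
proof (rule mlow_eq)
  let ?m = "mlow le sle a u"
  have 1: "sle (c *\<^sub>R ?m) (c *\<^sub>R a)" using sle_scale[OF mlow1] c by simp
  have 2: "le (c *\<^sub>R ?m) (c *\<^sub>R u)" using le_scale[OF mlow2] c by simp
  have 3: "le v (c *\<^sub>R ?m)" if "sle v (c *\<^sub>R a)" "le v (c *\<^sub>R u)" for v
  proof -
    have "sle ((1/c) *\<^sub>R v) a" using sle_scale[OF that(1), of "1/c"] c by simp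
    moreover have "le ((1/c) *\<^sub>R v) u" using le_scale[OF that(2), of "1/c"] c by simp
    ultimately have "le ((1/c) *\<^sub>R v) ?m" by (rule mlow3)
    then show ?thesis using le_scale[of "(1/c) *\<^sub>R v" ?m c] c by simp
  qed
  show "is_mlow le sle (c *\<^sub>R a) (c *\<^sub>R u) (c *\<^sub>R ?m)" unfolding is_mlow_def using 1 2 3 by blast
qed

lemma B_add: "le (sabs le sle (x + y)) (sabs le sle x + sabs le sle y)"
proof -
  have "le (M (x + y) + M (- x + - y)) ((M x + M y) + (M (- x) + M (- y)))"
    by (rule le_add2[OF M_sub M_sub])
  then show ?thesis unfolding sabs_eq by (simp add: algebra_simps)
qed

lemma B_mup: "le (sabs le sle (mup le sle x y)) (sabs le sle x + sabs le sle y + sabs le sle y)"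
proof -
  let ?u = "mup le sle x y"
  have h1: "sle x (x + M (- x) + M y)" by (rule sleI) (simp add: sle_add_pos M_pos)
  have x0: "le 0 (x + M (- x))" by (rule le_diff[OF leD[OF M_ge[of "-x"]]]) simp
  have h2: "le y (x + M (- x) + M y)" using le_add2[OF x0 M_ge[of y]] by simp
  have "le ?u (x + M (- x) + M y)" by (rule mup3[OF h1 h2])
  moreover have "le (x + M (- x) + M y) (sabs le sle x + M y)"
    unfolding sabs_eq by (intro le_add2 M_ge le_refl)
  ultimately have "le ?u (sabs le sle x + M y)" by (rule le_trans)
  then have a: "le (M ?u) (sabs le sle x + M y)" by (intro M_le sle_add_pos sabs_pos M_pos)
  have b: "le (M (- ?u)) (M (- y))" by (intro M_mono le_neg mup2)
  have "le (M ?u + M (- ?u)) ((sabs le sle x + M y) + M (- y))" by (rule le_add2[OF a b])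
  also have "le ((sabs le sle x + M y) + M (- y)) (sabs le sle x + sabs le sle y + sabs le sle y)"
    using M_le_sabs[of "-y"] sabs_neg[of y] by (intro le_add2 M_le_sabs le_refl) simp
  finally show ?thesis unfolding sabs_eq[of ?u] .
qed

lemma B_mlow: "le (sabs le sle (mlow le sle x y)) (sabs le sle x + sabs le sle y + sabs le sle y)"
proof -
  let ?u = "mlow le sle x y"
  let ?v = "x - M x - M (- y)"
  have h1: "sle ?v x" by (rule sleI) (simp add: sle_add_pos M_pos)
  have "le 0 ((M x - x) + (M (- y) + y))"
    by (rule co_pos_add[OF coL]) (rule le_diff[OF leD[OF M_ge[of x]]], simp, rule le_diff[OF leD[OF M_ge[of "-y"]]], simp)
  then have h2: "le ?v y" by (rule le_diff) (simp add: algebra_simps)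
  have "le ?v ?u" by (rule mlow3[OF h1 h2])
  then have "le (- ?u) (- ?v)" by (rule le_neg)
  moreover have "le (- ?v) (M x + M (- x) + M (- y))"
    using le_add2[OF le_add2[OF le_refl M_ge[of "-x"]] le_refl, of "M x" "M (- y)"]
    by (simp add: algebra_simps)
  ultimately have "le (- ?u) (sabs le sle x + M (- y))" unfolding sabs_eq by (rule le_trans)
  then have a: "le (M (- ?u)) (sabs le sle x + M (- y))" by (intro M_le sle_add_pos sabs_pos M_pos)
  have b: "le (M ?u) (M y)" by (intro M_mono mlow2)
  have "le (M ?u + M (- ?u)) (M y + (sabs le sle x + M (- y)))" by (rule le_add2[OF b a])
  also have "le (M y + (sabs le sle x + M (- y))) (sabs le sle y + (sabs le sle x + sabs le sle y))"
    using M_le_sabs[of "-y"] sabs_neg[of y] by (intro le_add2 M_le_sabs le_refl) simp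
  finally show ?thesis unfolding sabs_eq[of ?u] by (simp add: algebra_simps)
qed

lemma B_conv: "le x y \<Longrightarrow> le y z \<Longrightarrow> le (sabs le sle y) (sabs le sle z + sabs le sle x)"
proof -
  assume xy: "le x y" and yz: "le y z"
  have a: "le (M y) (sabs le sle z)" by (rule le_trans[OF M_mono[OF yz] M_le_sabs])
  have b: "le (M (- y)) (sabs le sle x)"
    using le_trans[OF M_mono[OF le_neg[OF xy]] M_le_sabs[of "-x"]] sabs_neg by simp
  show ?thesis unfolding sabs_eq[of y] by (rule le_add2[OF a b])
qed

end

locale mlvA = mlv +
  fixes A :: "'a set"
  assumes msA: "mixed_lattice_subspace le sle A"
begin

lemma A0: "0 \<in> A" using msA unfolding mixed_lattice_subspace_def linear_subspace_def by blast
lemma A_add: "x \<in> A \<Longrightarrow> y \<in> A \<Longrightarrow> x + y \<in> A"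
  using msA unfolding mixed_lattice_subspace_def linear_subspace_def by blast
lemma A_scale: "x \<in> A \<Longrightarrow> c *\<^sub>R x \<in> A"
  using msA unfolding mixed_lattice_subspace_def linear_subspace_def by blast
lemma A_neg: "x \<in> A \<Longrightarrow> - x \<in> A" using A_scale[of x "-1"] by simp
lemma A_mup: "x \<in> A \<Longrightarrow> y \<in> A \<Longrightarrow> mup le sle x y \<in> A"
  using msA unfolding mixed_lattice_subspace_def by blast
lemma A_sabs: "z \<in> A \<Longrightarrow> sabs le sle z \<in> A"
  unfolding sabs_eq by (intro A_add A_mup A0 A_neg)

definition Q where "Q u \<longleftrightarrow> (\<forall>a\<in>A. sle 0 a \<longrightarrow> mlow le sle a u = 0)"

lemma R_iff: "(\<forall>z\<in>A. mlow le sle (sabs le sle z) (sabs le sle x) = 0) \<longleftrightarrow> Q (sabs le sle x)"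
proof
  assume H: "\<forall>z\<in>A. mlow le sle (sabs le sle z) (sabs le sle x) = 0"
  show "Q (sabs le sle x)" unfolding Q_def
  proof (intro ballI impI)
    fix a assume "a \<in> A" "sle 0 a"
    moreover have "mlow le sle (sabs le sle a) (sabs le sle x) = 0" using H \<open>a \<in> A\<close> by blast
    ultimately show "mlow le sle a (sabs le sle x) = 0" using sabs_sp[of a] by simp
  qed
next
  assume H: "Q (sabs le sle x)"
  show "\<forall>z\<in>A. mlow le sle (sabs le sle z) (sabs le sle x) = 0"
  proof
    fix z assume "z \<in> A"
    then show "mlow le sle (sabs le sle z) (sabs le sle x) = 0"
      using H A_sabs[of z] sabs_pos[of z] unfolding Q_def by simp
  qed
qed

lemma Q_add: "sle 0 u \<Longrightarrow> sle 0 v \<Longrightarrow> Q u \<Longrightarrow> Q v \<Longrightarrow> Q (u + v)"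
  unfolding Q_def by (intro ballI impI mlow_add0) auto

lemma Q_down: "Q u \<Longrightarrow> le 0 t \<Longrightarrow> le t u \<Longrightarrow> Q t"
  unfolding Q_def
proof (intro ballI impI)
  fix a assume h: "\<forall>a\<in>A. sle 0 a \<longrightarrow> mlow le sle a u = 0" "le 0 t" "le t u" "a \<in> A" "sle 0 a"
  have "le (mlow le sle a t) (mlow le sle a u)" by (rule mlow_mono[OF h(3)])
  then have "le (mlow le sle a t) 0" using h by simp
  then show "mlow le sle a t = 0"
    using le_antisym mlow_nonneg[OF h(5) h(2)] by blast
qed

lemma Q_scale: "Q u \<Longrightarrow> 0 < c \<Longrightarrow> Q (c *\<^sub>R u)"
  unfolding Q_def
proof (intro ballI impI)
  fix a assume Qu: "\<forall>a\<in>A. sle 0 a \<longrightarrow> mlow le sle a u = 0" and c: "0 < c"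
    and a: "a \<in> A" "sle 0 a"
  have a': "(1/c) *\<^sub>R a \<in> A" by (rule A_scale[OF a(1)])
  have a'': "sle 0 ((1/c) *\<^sub>R a)" using sle_scale[OF a(2), of "1/c"] c by simp
  have "mlow le sle a (c *\<^sub>R u) = mlow le sle (c *\<^sub>R ((1/c) *\<^sub>R a)) (c *\<^sub>R u)"
    using c by simp
  also have "\<dots> = c *\<^sub>R mlow le sle ((1/c) *\<^sub>R a) u" by (rule mlow_hom[OF c])
  also have "\<dots> = 0" using Qu a' a'' by simp
  finally show "mlow le sle a (c *\<^sub>R u) = 0" .
qed

lemma Q0: "Q 0"
  unfolding Q_def
proof (intro ballI impI)
  fix a assume "a \<in> A" "sle 0 a"
  show "mlow le sle a 0 = 0"
    by (rule le_antisym[OF mlow2 mlow_nonneg[OF \<open>sle 0 a\<close> le_refl]])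
qed

lemma sabs0: "sabs le sle 0 = 0" using sabs_sp[OF co_refl[OF coS]] .

definition R where "R = {x. Q (sabs le sle x)}"

lemma R_bound:
  assumes "x \<in> R" "y \<in> R" "le (sabs le sle t) (sabs le sle x + sabs le sle y + sabs le sle y)"
  shows "t \<in> R"
proof -
  have Qx: "Q (sabs le sle x)" and Qy: "Q (sabs le sle y)" using assms(1,2) unfolding R_def by auto
  have "Q (sabs le sle x + sabs le sle y + sabs le sle y)"
    by (intro Q_add sle_add_pos sabs_pos Qx Qy)
  then show ?thesis unfolding R_def mem_Collect_eq by (rule Q_down[OF _ sabs_nonneg assms(3)])
qed

lemma R_ideal: "ml_ideal le sle R"
proof -
  have zero: "0 \<in> R" unfolding R_def using Q0 sabs0 by simp
  have add: "x + y \<in> R" if "x \<in> R" "y \<in> R" for x y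
  proof (rule R_bound[OF that])
    have "le (sabs le sle x + sabs le sle y) (sabs le sle x + sabs le sle y + sabs le sle y)"
      using le_add2[OF le_refl sabs_nonneg, of "sabs le sle x + sabs le sle y" y] by simp
    then show "le (sabs le sle (x + y)) (sabs le sle x + sabs le sle y + sabs le sle y)"
      by (rule le_trans[OF B_add])
  qed
  have scale: "c *\<^sub>R x \<in> R" if "x \<in> R" for x c
  proof -
    have Qx: "Q (sabs le sle x)" using that unfolding R_def by simp
    consider "0 < c" | "c = 0" | "c < 0" by linarith
    then show ?thesis
    proof cases
      case 1 then show ?thesis unfolding R_def using sabs_hom Q_scale Qx by simp
    next
      case 2 then show ?thesis using zero by simp
    next
      case 3
      have "c *\<^sub>R x = (- c) *\<^sub>R (- x)" by simp
      then have "sabs le sle (c *\<^sub>R x) = (- c) *\<^sub>R sabs le sle x"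
        using sabs_hom[of "-c" "-x"] 3 sabs_neg by simp
      then show ?thesis unfolding R_def using Q_scale[OF Qx, of "-c"] 3 by simp
    qed
  qed
  have mlowR: "mlow le sle x y \<in> R" if "x \<in> R" "y \<in> R" for x y
    by (rule R_bound[OF that B_mlow])
  have mupR: "mup le sle x y \<in> R" if "x \<in> R" "y \<in> R" for x y
    by (rule R_bound[OF that B_mup])
  have conv: "y \<in> R" if "x \<in> R" "z \<in> R" "le x y" "le y z" for x y z
  proof (rule R_bound[OF that(2) that(1)])
    have "le (sabs le sle z + sabs le sle x) (sabs le sle z + sabs le sle x + sabs le sle x)"
      using le_add2[OF le_refl sabs_nonneg, of "sabs le sle z + sabs le sle x" x] by simp
    then show "le (sabs le sle y) (sabs le sle z + sabs le sle x + sabs le sle x)"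
      by (rule le_trans[OF B_conv[OF that(3,4)]])
  qed
  show ?thesis
    unfolding ml_ideal_def mixed_lattice_subspace_def linear_subspace_def
  proof (intro conjI ballI allI impI)
    fix x y z assume "x \<in> R" "z \<in> R" "le x y \<and> le y z"
    then show "y \<in> R" using conv[of x z y] by simp
  qed (simp_all add: zero add scale mlowR mupR)
qed

lemma main:
  "right_disj_compl le sle A = {x. \<forall>z\<in>A. mlow le sle (sabs le sle z) (sabs le sle x) = 0}"
proof -
  let ?D = "{x\<in>Vsp sle. \<forall>z\<in>A \<inter> Vsp sle. mlow le sle z x = 0}"
  have RR: "{x. \<forall>z\<in>A. mlow le sle (sabs le sle z) (sabs le sle x) = 0} = R"
    unfolding R_def using R_iff by simp
  have DR: "?D \<subseteq> R"
  proof
    fix x assume "x \<in> ?D"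
    then have "sle 0 x" "\<forall>z\<in>A. sle 0 z \<longrightarrow> mlow le sle z x = 0" unfolding Vsp_def by auto
    then show "x \<in> R" unfolding R_def Q_def using sabs_sp by simp
  qed
  have 1: "right_disj_compl le sle A \<subseteq> R"
    unfolding right_disj_compl_def by (rule Inter_lower) (simp add: R_ideal DR)
  have 2: "x \<in> I" if "x \<in> R" "ml_ideal le sle I" "?D \<subseteq> I" for x I
  proof -
    have "Q (sabs le sle x)" using that(1) unfolding R_def by simp
    then have "sabs le sle x \<in> ?D" using sabs_pos unfolding Q_def Vsp_def by auto
    then have s: "sabs le sle x \<in> I" using that(3) by blast
    have ns: "(-1::real) *\<^sub>R sabs le sle x \<in> I"
      using that(2) s unfolding ml_ideal_def mixed_lattice_subspace_def linear_subspace_def by blast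
    have l: "le (- sabs le sle x) x" using le_neg[OF sabs_ge'[of x]] by simp
    have cv: "\<forall>x\<in>I. \<forall>z\<in>I. \<forall>y. le x y \<and> le y z \<longrightarrow> y \<in> I"
      using that(2) unfolding ml_ideal_def by blast
    have ns': "- sabs le sle x \<in> I" using ns by simp
    show "x \<in> I" using cv[rule_format, OF ns' s] l sabs_ge[of x] by blast
  qed
  have "R \<subseteq> right_disj_compl le sle A"
    unfolding right_disj_compl_def
  proof (rule Inter_greatest)
    fix I assume "I \<in> {I. ml_ideal le sle I \<and> ?D \<subseteq> I}"
    then have I: "ml_ideal le sle I" "?D \<subseteq> I" by auto
    show "R \<subseteq> I"
    proof
      fix x assume "x \<in> R"
      then show "x \<in> I" by (rule 2[OF _ I])
    qed
  qed
  with 1 RR show ?thesis by blast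
qed

end

theorem theorem5p19:
  fixes le sle :: "'a::real_vector \<Rightarrow> 'a \<Rightarrow> bool" and A :: "'a set"
  assumes "mixed_lattice_vs le sle"
    and "quasi_regular le sle"
    and "mixed_lattice_subspace le sle A"
  shows "right_disj_compl le sle A =
           {x. \<forall>z\<in>A. mlow le sle (sabs le sle z) (sabs le sle x) = 0}"
proof -
  interpret mlvA le sle A using assms by unfold_locales
  show ?thesis by (rule main)
qed

end
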